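(* Let $G$ be a graph with a Hamilton path $L=x_0x_1\ldots x_p$. Then there is a bond of $G$ meeting every path of $G$ of length at least $\lceil (p+1)/2\rceil$.
   Context: All graphs are finite, simple and undirected. A Hamilton path is a path containing every vertex of the graph. The length of a path is its number of edges. A bond of $G$ is a minimal nonempty edge-cut, where an edge-cut is a set of edges of the form $\{xy\in E(G): x\in X, y\in V(G)\setminus X\}$ for some $X\subseteq V(G)$. A set of edges meets a path if the path contains at least one edge of the set. *)

theory Defs
  imports Complex_Main
begin

definition simple_graph :: "'a set \<Rightarrow> 'a set set \<Rightarrow> bool" where
  "simple_graph V E \<longleftrightarrow> finite V \<and>
     (\<forall>e\<in>E. \<exists>x y. x \<in> V \<and> y \<in> V \<and> x \<noteq> y \<and> e = {x, y})"

definition is_path :: "'a set \<Rightarrow> 'a set set \<Rightarrow> 'a list \<Rightarrow> bool" where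
  "is_path V E xs \<longleftrightarrow> xs \<noteq> [] \<and> distinct xs \<and> set xs \<subseteq> V \<and>
     (\<forall>i. Suc i < length xs \<longrightarrow> {xs ! i, xs ! Suc i} \<in> E)"

definition path_edges :: "'a list \<Rightarrow> 'a set set" where
  "path_edges xs = {{xs ! i, xs ! Suc i} | i. Suc i < length xs}"

definition path_length :: "'a list \<Rightarrow> nat" where
  "path_length xs = length xs - 1"

definition hamilton_path :: "'a set \<Rightarrow> 'a set set \<Rightarrow> 'a list \<Rightarrow> bool" where
  "hamilton_path V E xs \<longleftrightarrow> is_path V E xs \<and> set xs = V"

definition edge_cut :: "'a set \<Rightarrow> 'a set set \<Rightarrow> 'a set \<Rightarrow> 'a set set" where
  "edge_cut V E X = {e \<in> E. \<exists>x\<in>X. \<exists>y\<in>V - X. e = {x, y}}"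

definition is_edge_cut :: "'a set \<Rightarrow> 'a set set \<Rightarrow> 'a set set \<Rightarrow> bool" where
  "is_edge_cut V E F \<longleftrightarrow> (\<exists>X. X \<subseteq> V \<and> F = edge_cut V E X)"

definition is_bond :: "'a set \<Rightarrow> 'a set set \<Rightarrow> 'a set set \<Rightarrow> bool" where
  "is_bond V E F \<longleftrightarrow> is_edge_cut V E F \<and> F \<noteq> {} \<and>
     (\<forall>F'. is_edge_cut V E F' \<and> F' \<noteq> {} \<and> F' \<subseteq> F \<longrightarrow> F' = F)"

definition meets :: "'a set set \<Rightarrow> 'a list \<Rightarrow> bool" where
  "meets F xs \<longleftrightarrow> F \<inter> path_edges xs \<noteq> {}"

end

theory Submission
  imports Defs
begin

lemma chain_eq:
  assumes "\<And>j. Suc j < k \<Longrightarrow> Q j = Q (Suc j)" and "i < k"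
  shows "Q i = Q 0"
  using assms(2)
proof (induction i)
  case 0 then show ?case by simp
next
  case (Suc i)
  then have "Q i = Q 0" by simp
  moreover have "Q i = Q (Suc i)" using assms(1) Suc.prems by blast
  ultimately show ?case by simp
qed

lemma cut_mem:
  assumes "{u, v} \<in> E" "u \<in> X" "v \<in> V" "v \<notin> X"
  shows "{u, v} \<in> edge_cut V E X"
  using assms unfolding edge_cut_def by blast

lemma cut_mem':
  assumes "{u, v} \<in> E" "v \<in> X" "u \<in> V" "u \<notin> X"
  shows "{u, v} \<in> edge_cut V E X"
  using cut_mem[of v u E X V] assms by (simp add: insert_commute)

lemma not_cut:
  assumes "(u \<in> X) = (v \<in> X)"
  shows "{u, v} \<notin> edge_cut V E X"
  using assms unfolding edge_cut_def by (auto simp: doubleton_eq_iff)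

lemma arith_aux: "(n::nat) \<le> 2 * (k - 1) \<Longrightarrow> k \<ge> 1 \<Longrightarrow> n - n div 2 < k"
  by presburger

lemma arith_aux2: "(c::nat) \<le> n div 2 \<Longrightarrow> n - n div 2 < l \<Longrightarrow> c = l \<Longrightarrow> False"
  by presburger

theorem lemma5:
  fixes V :: "'a set" and E :: "'a set set" and L :: "'a list"
  assumes "simple_graph V E"
    and "hamilton_path V E L"
    and "path_length L \<ge> 1"
  shows "\<exists>F. is_bond V E F \<and>
           (\<forall>P. is_path V E P \<and>
                 real (path_length P) \<ge> of_int \<lceil>(real (path_length L) + 1) / 2\<rceil>
                 \<longrightarrow> meets F P)"
proof -
  define n where "n = length L"
  define m where "m = n div 2"
  define X where "X = set (take m L)"
  define F where "F = edge_cut V E X"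
  have dist: "distinct L" and setL: "set L = V"
    and edg: "\<And>i. Suc i < n \<Longrightarrow> {L ! i, L ! Suc i} \<in> E"
    using assms(2) unfolding hamilton_path_def is_path_def n_def by auto
  have n2: "n \<ge> 2" using assms(3) unfolding path_length_def n_def by simp
  have m1: "1 \<le> m" "m < n" using n2 unfolding m_def by auto
  have inV: "\<And>i. i < n \<Longrightarrow> L ! i \<in> V" using setL n_def by auto
  have memX: "(L ! i \<in> X) = (i < m)" if "i < n" for i
  proof
    assume "L ! i \<in> X"
    then obtain j where j: "j < length (take m L)" "take m L ! j = L ! i"
      unfolding X_def by (auto simp: in_set_conv_nth)
    then have "L ! j = L ! i" "j < n" "j < m" by (auto simp: n_def)
    then have "j = i" using dist that n_def nth_eq_iff_index_eq by metis
    then show "i < m" using j by (simp add: n_def)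
  next
    assume "i < m"
    then have "take m L ! i = L ! i" "i < length (take m L)" using that n_def by auto
    then show "L ! i \<in> X" unfolding X_def by (metis nth_mem)
  qed
  have XV: "X \<subseteq> V" unfolding X_def using set_take_subset[of m L] setL by simp
  have bond: "is_bond V E F"
    unfolding is_bond_def
  proof (intro conjI allI impI)
    show "is_edge_cut V E F" unfolding is_edge_cut_def F_def using XV by blast
    have "{L ! (m - 1), L ! Suc (m - 1)} \<in> F"
      unfolding F_def
      apply (rule cut_mem)
      using m1 edg[of "m - 1"] memX[of "m - 1"] memX[of "Suc (m - 1)"] inV[of "Suc (m-1)"]
      by auto
    then show "F \<noteq> {}" by blast
  next
    fix F' assume H: "is_edge_cut V E F' \<and> F' \<noteq> {} \<and> F' \<subseteq> F"
    then obtain X' where X': "X' \<subseteq> V" "F' = edge_cut V E X'"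
      unfolding is_edge_cut_def by blast
    have step: "(L ! i \<in> X') = (L ! Suc i \<in> X')" if "Suc i < n" "Suc i \<noteq> m" for i
    proof (rule ccontr)
      assume c: "(L ! i \<in> X') \<noteq> (L ! Suc i \<in> X')"
      have "{L ! i, L ! Suc i} \<notin> F" unfolding F_def
        apply (rule not_cut) using memX that by auto
      moreover have "{L ! i, L ! Suc i} \<in> F'"
        using c edg[OF that(1)] inV that X' cut_mem cut_mem' by (metis Suc_lessD)
      ultimately show False using H by blast
    qed
    define a where "a = (L ! 0 \<in> X')"
    define b where "b = (L ! m \<in> X')"
    have A: "(L ! i \<in> X') = a" if "i < m" for i
      unfolding a_def
      apply (rule chain_eq[where Q = "\<lambda>j. L ! j \<in> X'" and k = m])
      using step m1 that by auto
    have B: "(L ! (m + i) \<in> X') = b" if "i < n - m" for i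
      using chain_eq[where Q = "\<lambda>j. L ! (m + j) \<in> X'" and k = "n - m" and i = i] step that
      unfolding b_def by auto
    have mem: "(L ! i \<in> X') = (if i < m then a else b)" if "i < n" for i
    proof (cases "i < m")
      case True then show ?thesis using A by simp
    next
      case False
      then show ?thesis using B[of "i - m"] that by auto
    qed
    have ex: "\<exists>i<n. v = L ! i" if "v \<in> V" for v
      using that setL n_def by (auto simp: in_set_conv_nth)
    show "F' = F"
    proof (cases "a = b")
      case True
      obtain e where "e \<in> F'" using H by blast
      then obtain x y where "x \<in> X'" "y \<in> V - X'" using X' unfolding edge_cut_def by blast
      then show ?thesis using True mem ex X' by (metis DiffE subsetD)
    next
      case False
      have "F \<subseteq> F'"
      proof
        fix e assume "e \<in> F"
        then obtain x y where e: "e \<in> E" "x \<in> X" "y \<in> V - X" "e = {x, y}"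
          unfolding F_def edge_cut_def by blast
        obtain i where i: "i < n" "x = L ! i" using ex e XV by blast
        obtain j where j: "j < n" "y = L ! j" using ex e by blast
        have "i < m" using memX i e by blast
        have "\<not> j < m" using memX j e by blast
        have xm: "(x \<in> X') = a" using mem i \<open>i < m\<close> by simp
        have ym: "(y \<in> X') = b" using mem j \<open>\<not> j < m\<close> by simp
        show "e \<in> F'"
        proof (cases a)
          case True
          then have "x \<in> X'" "y \<notin> X'" "y \<in> V" using xm ym False e by auto
          then show ?thesis using e(1,4) X'(2) cut_mem by metis
        next
          case f: False
          then have "y \<in> X'" "x \<notin> X'" "x \<in> V" using xm ym False e XV by auto
          then show ?thesis using e(1,4) X'(2) cut_mem' by metis
        qed
      qed
      then show ?thesis using H by blast
    qed
  qed
  have meet: "meets F P" if P: "is_path V E P"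
    "real (path_length P) \<ge> of_int \<lceil>(real (path_length L) + 1) / 2\<rceil>" for P
  proof (rule ccontr)
    assume nm: "\<not> meets F P"
    have Pd: "distinct P" "set P \<subseteq> V" "P \<noteq> []"
      and Pe: "\<And>i. Suc i < length P \<Longrightarrow> {P ! i, P ! Suc i} \<in> E"
      using P(1) unfolding is_path_def by auto
    have stepP: "(P ! j \<in> X) = (P ! Suc j \<in> X)" if "Suc j < length P" for j
    proof (rule ccontr)
      assume c: "(P ! j \<in> X) \<noteq> (P ! Suc j \<in> X)"
      have v: "P ! j \<in> V" "P ! Suc j \<in> V" using Pd that by (auto intro!: subsetD[OF Pd(2)])
      have "{P ! j, P ! Suc j} \<in> F" unfolding F_def
        using c Pe[OF that] v cut_mem cut_mem' by metis
      moreover have "{P ! j, P ! Suc j} \<in> path_edges P"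
        unfolding path_edges_def using that by blast
      ultimately show False using nm unfolding meets_def by blast
    qed
    have allP: "(P ! i \<in> X) = (P ! 0 \<in> X)" if "i < length P" for i
      using chain_eq[where Q = "\<lambda>j. P ! j \<in> X" and k = "length P"] stepP that by blast
    have "real (path_length L) + 1 = real n" using n2 unfolding path_length_def n_def by simp
    then have "real (path_length P) \<ge> real n / 2" using P(2)
      by (metis le_of_int_ceiling order_trans)
    then have "2 * (length P - 1) \<ge> n" unfolding path_length_def by linarith
    then have lp: "length P > n - m" unfolding m_def using arith_aux Pd(3) by (metis One_nat_def Suc_leI length_greater_0_conv)
    have cP: "card (set P) = length P" using Pd distinct_card by blast
    show False
    proof (cases "P ! 0 \<in> X")
      case True
      then have "set P \<subseteq> X" using allP by (auto simp: in_set_conv_nth)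
      then have "card (set P) \<le> card X" unfolding X_def by (simp add: card_mono)
      also have "\<dots> \<le> m" unfolding X_def using card_length[of "take m L"] by simp
      finally show False using lp cP m1 arith_aux2 unfolding m_def by metis
    next
      case False
      have "set P \<subseteq> V - X"
      proof
        fix v assume "v \<in> set P"
        then obtain i where "i < length P" "v = P ! i" by (auto simp: in_set_conv_nth)
        then show "v \<in> V - X" using allP[of i] False Pd(2) \<open>v \<in> set P\<close> by blast
      qed
      also have "V = X \<union> set (drop m L)" unfolding X_def using setL
        by (metis append_take_drop_id set_append)
      then have "V - X \<subseteq> set (drop m L)" by blast
      finally have "card (set P) \<le> card (set (drop m L))" by (simp add: card_mono)
      also have "\<dots> \<le> n - m" using card_length[of "drop m L"] n_def by simp
      finally show False using lp cP by linarith
    qed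
  qed
  show ?thesis using bond meet by blast
qed

end
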